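(* Let $M$ be a real $n\times n$ matrix and $v\in\mathbb R^n$, and suppose $\|M-vv^\top\|\le\|M\|-\epsilon\|v\|^2$. Then if $u,w$ are top unit left and right singular vectors of $M$, respectively, $\langle u,v\rangle^2\ge\epsilon\|v\|^2$ or $\langle w,v\rangle^2\ge\epsilon\|v\|^2$.
   Context: $\|\cdot\|$ is the spectral norm for matrices and Euclidean norm for vectors. *)

theory Defs
  imports "HOL-Analysis.Analysis"
begin

definition spec_norm :: "real^'n^'n \<Rightarrow> real" where
  "spec_norm M = onorm (\<lambda>x. M *v x)"

definition outer :: "real^'n \<Rightarrow> real^'n \<Rightarrow> real^'n^'n" where
  "outer v w = (\<chi> i j. v $ i * w $ j)"

definition top_singular_pair :: "real^'n^'n \<Rightarrow> real^'n \<Rightarrow> real^'n \<Rightarrow> bool" where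
  "top_singular_pair M u w \<longleftrightarrow> norm u = 1 \<and> norm w = 1 \<and>
     M *v w = spec_norm M *\<^sub>R u \<and> transpose M *v u = spec_norm M *\<^sub>R w"

end

theory Submission
  imports Defs
begin

lemma outer_mul: "outer v v *v w = (v \<bullet> w) *\<^sub>R (v::real^'n)"
  by (simp add: outer_def matrix_vector_mult_def inner_vec_def vec_eq_iff sum_distrib_left mult.commute mult.left_commute)

theorem mainTheorem14:
  fixes M :: "real^'n^'n" and v u w :: "real^'n" and \<epsilon> :: real
  assumes "spec_norm (M - outer v v) \<le> spec_norm M - \<epsilon> * (norm v)^2"
    and "top_singular_pair M u w"
  shows "(u \<bullet> v)^2 \<ge> \<epsilon> * (norm v)^2 \<or> (w \<bullet> v)^2 \<ge> \<epsilon> * (norm v)^2"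
proof -
  let ?A = "M - outer v v"
  let ?s = "spec_norm M"
  have u1: "norm u = 1" and w1: "norm w = 1" and Mw: "M *v w = ?s *\<^sub>R u"
    using assms(2) unfolding top_singular_pair_def by auto
  have uu: "u \<bullet> u = 1" using u1 by (simp add: dot_square_norm)
  have eq: "u \<bullet> (?A *v w) = ?s - (u \<bullet> v) * (w \<bullet> v)"
    using uu by (simp add: matrix_vector_mult_diff_rdistrib Mw outer_mul inner_diff_right inner_commute)
  have "u \<bullet> (?A *v w) \<le> norm u * norm (?A *v w)" by (rule norm_cauchy_schwarz)
  also have "\<dots> = norm (?A *v w)" using u1 by simp
  also have "\<dots> \<le> spec_norm ?A * norm w"
    unfolding spec_norm_def by (rule onorm) (rule matrix_vector_mul_bounded_linear)
  also have "\<dots> = spec_norm ?A" using w1 by simp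
  finally have "?s - (u \<bullet> v) * (w \<bullet> v) \<le> spec_norm ?A" using eq by simp
  with assms(1) have ab: "(u \<bullet> v) * (w \<bullet> v) \<ge> \<epsilon> * (norm v)^2" by simp
  show ?thesis
  proof (cases "\<epsilon> * (norm v)^2 \<le> 0")
    case True then show ?thesis by (meson order_trans zero_le_power2)
  next
    case False
    define c where "c = \<epsilon> * (norm v)^2"
    define a where "a = u \<bullet> v"
    define b where "b = w \<bullet> v"
    have c0: "c > 0" using False c_def by simp
    have "c \<le> a * b" using ab a_def b_def c_def by simp
    hence "c^2 \<le> (a*b)^2" using c0 by (simp add: power_mono)
    hence "c * c \<le> a^2 * b^2" by (simp add: power2_eq_square algebra_simps)
    hence "a^2 \<ge> c \<or> b^2 \<ge> c"
      by (smt (verit) c0 mult_strict_mono zero_le_power2)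
    then show ?thesis using a_def b_def c_def by simp
  qed
qed

end
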